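(* Let $n\ge k\ge 1$ and let $\lambda=(\lambda_1,\ldots,\lambda_k)$ be a partition with $\lambda_1\ge\lambda_2\ge\cdots\ge\lambda_k\ge 0$ and $\lambda_1\le n-k$, and set $\lambda_{k+1}:=0$. Then the weight generating function $P_\lambda(\alpha,\beta)=\sum_T \mathrm{wt}(T)$, summed over all Condensed Catalan tableaux $T$ of size $(k,n)$ and shape $\lambda$, equals $$P_\lambda(\alpha,\beta)=\alpha^k\beta^{n-k}\det\big(A_{ij}\big)_{1\le i,j\le k},$$ where $$A_{ij}=\beta^{j-i}\alpha^{\lambda_i-\lambda_{j+1}}\left(\binom{\lambda_{j+1}}{j-i}+\beta\binom{\lambda_{j+1}}{j-i+1}\right)+\beta^{j-i}\alpha^{\lambda_i-\lambda_j}\sum_{\ell=0}^{\lambda_j-\lambda_{j+1}-1}\alpha^{\ell}\left(\binom{\lambda_j-\ell-1}{j-i-1}+\beta\binom{\lambda_j-\ell-1}{j-i}\right).$$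
   Context: Binomial coefficients $\binom{a}{b}$ (here always with $a\ge 0$) are $0$ when $b<0$ or $b>a$; an empty sum is $0$. The Young diagram of $\lambda$ (English convention) consists of boxes $(r,c)$ with $1\le r\le k$, $1\le c\le\lambda_r$ (row 1 on top, column 1 leftmost), viewed inside a $k\times(n-k)$ rectangle. A Condensed Catalan tableau of size $(k,n)$ and shape $\lambda$ is an assignment to each box of one of $\alpha$, $\beta$, or empty, such that: (ii) if box $(r,c)$ contains $\beta$, every box $(r,c')$ with $c'<c$ is empty; (iii) if box $(r,c)$ contains $\alpha$, every box $(r',c)$ with $r'<r$ is empty; (iv) every box $(r,c)$ such that there is no $\alpha$ in any box $(r',c)$ with $r'>r$ and no $\beta$ in any box $(r,c')$ with $c'>c$ contains $\alpha$ or $\beta$. Its weight is $\mathrm{wt}(T)=\alpha^{k+a}\beta^{n-k+b}$, where $a$ and $b$ are the numbers of $\alpha$'s and $\beta$'s in the filling. *)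

theory Defs
  imports Complex_Main "Jordan_Normal_Form.Determinant"
begin

datatype cell = Alpha | Beta | Empty

definition boxes :: "nat \<Rightarrow> (nat \<Rightarrow> nat) \<Rightarrow> (nat \<times> nat) set" where
  "boxes k lam = {(r, c). 1 \<le> r \<and> r \<le> k \<and> 1 \<le> c \<and> c \<le> lam r}"

definition is_CCT :: "nat \<Rightarrow> (nat \<Rightarrow> nat) \<Rightarrow> (nat \<times> nat \<Rightarrow> cell) \<Rightarrow> bool" where
  "is_CCT k lam T \<longleftrightarrow>
     (\<forall>x. x \<notin> boxes k lam \<longrightarrow> T x = Empty) \<and>
     (\<forall>r c. (r, c) \<in> boxes k lam \<longrightarrow> T (r, c) = Beta \<longrightarrow>
        (\<forall>c'. 1 \<le> c' \<and> c' < c \<longrightarrow> T (r, c') = Empty)) \<and>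
     (\<forall>r c. (r, c) \<in> boxes k lam \<longrightarrow> T (r, c) = Alpha \<longrightarrow>
        (\<forall>r'. 1 \<le> r' \<and> r' < r \<longrightarrow> T (r', c) = Empty)) \<and>
     (\<forall>r c. (r, c) \<in> boxes k lam \<longrightarrow>
        (\<not> (\<exists>r'. r' > r \<and> (r', c) \<in> boxes k lam \<and> T (r', c) = Alpha)) \<longrightarrow>
        (\<not> (\<exists>c'. c' > c \<and> (r, c') \<in> boxes k lam \<and> T (r, c') = Beta)) \<longrightarrow>
        T (r, c) \<noteq> Empty)"

definition num_alpha :: "nat \<Rightarrow> (nat \<Rightarrow> nat) \<Rightarrow> (nat \<times> nat \<Rightarrow> cell) \<Rightarrow> nat" where
  "num_alpha k lam T = card {x \<in> boxes k lam. T x = Alpha}"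

definition num_beta :: "nat \<Rightarrow> (nat \<Rightarrow> nat) \<Rightarrow> (nat \<times> nat \<Rightarrow> cell) \<Rightarrow> nat" where
  "num_beta k lam T = card {x \<in> boxes k lam. T x = Beta}"

definition wt :: "nat \<Rightarrow> nat \<Rightarrow> (nat \<Rightarrow> nat) \<Rightarrow> real \<Rightarrow> real \<Rightarrow> (nat \<times> nat \<Rightarrow> cell) \<Rightarrow> real" where
  "wt n k lam a b T = a ^ (k + num_alpha k lam T) * b ^ (n - k + num_beta k lam T)"

definition P_gen :: "nat \<Rightarrow> nat \<Rightarrow> (nat \<Rightarrow> nat) \<Rightarrow> real \<Rightarrow> real \<Rightarrow> real" where
  "P_gen n k lam a b = (\<Sum>T\<in>{T. is_CCT k lam T}. wt n k lam a b T)"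

definition cbinom :: "nat \<Rightarrow> int \<Rightarrow> real" where
  "cbinom a b = (if b < 0 then 0 else real (a choose nat b))"

definition Aentry :: "(nat \<Rightarrow> nat) \<Rightarrow> real \<Rightarrow> real \<Rightarrow> nat \<Rightarrow> nat \<Rightarrow> real" where
  "Aentry lam a b i j =
     b powi (int j - int i) * a powi (int (lam i) - int (lam (j + 1))) *
       (cbinom (lam (j + 1)) (int j - int i) + b * cbinom (lam (j + 1)) (int j - int i + 1))
   + b powi (int j - int i) * a powi (int (lam i) - int (lam j)) *
       (\<Sum>l<lam j - lam (j + 1).
          a ^ l * (cbinom (lam j - l - 1) (int j - int i - 1) + b * cbinom (lam j - l - 1) (int j - int i)))"

end

theory Submission
  imports Defs
begin


definition phi :: "real \<Rightarrow> real \<Rightarrow> nat \<Rightarrow> nat \<Rightarrow> nat \<Rightarrow> real" where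
  "phi a b l l' v = (if 0 < v then b else 1) * a ^ (l - max v l')"

fun CC :: "real \<Rightarrow> real \<Rightarrow> nat \<Rightarrow> (nat \<Rightarrow> nat) \<Rightarrow> nat \<Rightarrow> real" where
  "CC a b 0 lam x = 1"
| "CC a b (Suc k) lam x =
     (\<Sum>v\<in>{..min x (lam 1)}. phi a b (lam 1) (lam 2) v * CC a b k (\<lambda>i. lam (Suc i)) v)"

definition DD :: "real \<Rightarrow> real \<Rightarrow> nat \<Rightarrow> (nat \<Rightarrow> nat) \<Rightarrow> real" where
  "DD a b k lam = CC a b k lam (lam 1)"

fun Tt :: "real \<Rightarrow> real \<Rightarrow> nat \<Rightarrow> (nat \<Rightarrow> real) \<Rightarrow> nat \<Rightarrow> (nat \<Rightarrow> nat) \<Rightarrow> real" where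
  "Tt a b 0 G N mu = (\<Sum>y\<le>N. G y)"
| "Tt a b (Suc j) G N mu =
     Tt a b j (\<lambda>z. (\<Sum>y<min (Suc N) z. G y) * phi a b (mu 1) (mu 2) z) (mu 1) (\<lambda>i. mu (Suc i))"

lemma CC_ge: "lam 1 \<le> x \<Longrightarrow> CC a b k lam x = DD a b k lam"
  unfolding DD_def by (cases k) (auto simp: min_def)

lemma CC_split:
  "CC a b (Suc k) lam y = DD a b (Suc k) lam -
     (\<Sum>z\<in>{..lam 1}. (if y < z then phi a b (lam 1) (lam 2) z * CC a b k (\<lambda>i. lam (Suc i)) z else 0))"
proof -
  let ?F = "\<lambda>z. phi a b (lam 1) (lam 2) z * CC a b k (\<lambda>i. lam (Suc i)) z"
  have "DD a b (Suc k) lam = (\<Sum>z\<in>{..lam 1}. ?F z)" by (simp add: DD_def)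
  also have "\<dots> = (\<Sum>z\<in>{..lam 1}. (if y < z then ?F z else 0) + (if y < z then 0 else ?F z))"
    by (rule sum.cong) auto
  also have "\<dots> = (\<Sum>z\<in>{..lam 1}. (if y < z then ?F z else 0)) + (\<Sum>z\<in>{..lam 1}. (if y < z then 0 else ?F z))"
    by (rule sum.distrib)
  also have "(\<Sum>z\<in>{..lam 1}. (if y < z then 0 else ?F z)) = (\<Sum>z\<in>{..min y (lam 1)}. ?F z)"
    by (rule sum.mono_neutral_cong_right) auto
  finally show ?thesis by simp
qed

lemma IE:
  "(\<Sum>y\<le>N. G y * CC a b k mu y) =
   (\<Sum>j\<le>k. (-1)^j * Tt a b j G N mu * DD a b (k - j) (\<lambda>i. mu (i + j)))"
proof (induction k arbitrary: G N mu)
  case 0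
  then show ?case by (simp add: DD_def sum_distrib_right)
next
  case (Suc k)
  let ?F = "\<lambda>z. phi a b (mu 1) (mu 2) z * CC a b k (\<lambda>i. mu (Suc i)) z"
  let ?G' = "\<lambda>z. (\<Sum>y<min (Suc N) z. G y) * phi a b (mu 1) (mu 2) z"
  have "(\<Sum>y\<le>N. G y * CC a b (Suc k) mu y) =
     (\<Sum>y\<le>N. G y * DD a b (Suc k) mu - G y * (\<Sum>z\<in>{..mu 1}. (if y < z then ?F z else 0)))"
    by (intro sum.cong refl) (simp only: CC_split[of a b k mu] right_diff_distrib)
  also have "\<dots> = (\<Sum>y\<le>N. G y) * DD a b (Suc k) mu - (\<Sum>y\<le>N. \<Sum>z\<in>{..mu 1}. G y * (if y < z then ?F z else 0))"
    by (simp add: sum_subtractf sum_distrib_right sum_distrib_left)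
  also have "(\<Sum>y\<le>N. \<Sum>z\<in>{..mu 1}. G y * (if y < z then ?F z else 0)) =
        (\<Sum>z\<in>{..mu 1}. \<Sum>y\<le>N. G y * (if y < z then ?F z else 0))"
    by (rule sum.swap)
  also have "\<dots> = (\<Sum>z\<le>mu 1. ?G' z * CC a b k (\<lambda>i. mu (Suc i)) z)"
  proof (rule sum.cong[OF refl])
    fix z
    have "(\<Sum>y\<le>N. G y * (if y < z then ?F z else 0)) = (\<Sum>y\<in>{..<min (Suc N) z}. G y * ?F z)"
      by (rule sum.mono_neutral_cong_right) auto
    then show "(\<Sum>y\<le>N. G y * (if y < z then ?F z else 0)) = ?G' z * CC a b k (\<lambda>i. mu (Suc i)) z"
      by (simp add: sum_distrib_right mult.assoc)
  qed
  also have "\<dots> = (\<Sum>j\<le>k. (-1)^j * Tt a b (Suc j) G N mu * DD a b (k - j) (\<lambda>i. mu (i + Suc j)))"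
    using Suc.IH[where G="?G'" and N="mu 1" and mu="\<lambda>i. mu (Suc i)"] by simp
  finally have eq: "(\<Sum>y\<le>N. G y * CC a b (Suc k) mu y) = Tt a b 0 G N mu * DD a b (Suc k) mu
      - (\<Sum>j\<le>k. (-1)^j * Tt a b (Suc j) G N mu * DD a b (k - j) (\<lambda>i. mu (i + Suc j)))" by simp
  have "(\<Sum>j\<le>Suc k. (-1)^j * Tt a b j G N mu * DD a b (Suc k - j) (\<lambda>i. mu (i + j))) =
     Tt a b 0 G N mu * DD a b (Suc k) mu + (\<Sum>j\<le>k. (-1)^(Suc j) * Tt a b (Suc j) G N mu * DD a b (Suc k - Suc j) (\<lambda>i. mu (i + Suc j)))"
    by (subst sum.atMost_Suc_shift) simp
  also have "\<dots> = Tt a b 0 G N mu * DD a b (Suc k) mu - (\<Sum>j\<le>k. (-1)^j * Tt a b (Suc j) G N mu * DD a b (k - j) (\<lambda>i. mu (i + Suc j)))"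
    by (simp add: sum_negf[symmetric])
  finally show ?case using eq by simp
qed




definition cf :: "real \<Rightarrow> nat \<Rightarrow> nat \<Rightarrow> real" where
  "cf b s z = (if z = 0 then (if s = 0 then 1 else 0)
               else cbinom (z - 1) (int s - 1) + b * cbinom (z - 1) (int s))"

lemma cbinom_pascal: "cbinom (Suc z) t = cbinom z t + cbinom z (t - 1)"
proof (cases "t < 0")
  case True then show ?thesis by (simp add: cbinom_def)
next
  case False
  show ?thesis
  proof (cases "t = 0")
    case True then show ?thesis by (simp add: cbinom_def)
  next
    case False
    from False \<open>\<not> t < 0\<close> obtain m where m: "nat t = Suc m" by (cases "nat t") auto
    then have t1: "t = int (Suc m)" and t2: "t - 1 = int m" using \<open>\<not> t < 0\<close> by auto
    show ?thesis unfolding cbinom_def using t1 t2 m by simp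
  qed
qed

lemma cbinom_0: "cbinom 0 t = (if t = 0 then 1 else 0)"
  by (auto simp: cbinom_def)

lemma cf_sum: "(\<Sum>y<z. cf b s y) = cf b (Suc s) z"
proof (induction z)
  case 0 then show ?case by (simp add: cf_def)
next
  case (Suc z)
  have "(\<Sum>y<Suc z. cf b s y) = cf b (Suc s) z + cf b s z" using Suc by simp
  also have "\<dots> = cf b (Suc s) (Suc z)"
  proof (cases z)
    case 0 then show ?thesis by (cases s) (auto simp: cf_def cbinom_0)
  next
    case (Suc z')
    have "cf b (Suc s) (Suc z) = cbinom (Suc z') (int s) + b * cbinom (Suc z') (1 + int s)"
      using Suc by (simp add: cf_def)
    also have "\<dots> = (cbinom z' (int s) + cbinom z' (int s - 1)) + b * (cbinom z' (1 + int s) + cbinom z' (int s))"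
      by (simp only: cbinom_pascal) simp
    finally have h3: "cf b (Suc s) (Suc z) = cbinom z' (int s) + cbinom z' (int s - 1) + b * (cbinom z' (1 + int s) + cbinom z' (int s))" .
    have h1: "cf b (Suc s) z = cbinom z' (int s) + b * cbinom z' (1 + int s)" using Suc by (simp add: cf_def)
    have h2: "cf b s z = cbinom z' (int s - 1) + b * cbinom z' (int s)" using Suc by (simp add: cf_def)
    show ?thesis by (simp only: h1 h2 h3) (simp add: algebra_simps)
  qed
  finally show ?case .
qed

lemma Tt_cong: "(\<And>y. y \<le> N \<Longrightarrow> G y = G' y) \<Longrightarrow> Tt a b j G N mu = Tt a b j G' N mu"
proof (induction j arbitrary: G G' N mu)
  case 0 then show ?case by simp
next
  case (Suc j)
  have eq: "(\<lambda>z. (\<Sum>y<min (Suc N) z. G y) * phi a b (mu 1) (mu 2) z) =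
        (\<lambda>z. (\<Sum>y<min (Suc N) z. G' y) * phi a b (mu 1) (mu 2) z)"
    using Suc.prems by (intro ext) (auto intro!: sum.cong)
  show ?case unfolding Tt.simps by (subst eq) (rule refl)
qed

definition Gs :: "real \<Rightarrow> real \<Rightarrow> (nat \<Rightarrow> nat) \<Rightarrow> nat \<Rightarrow> nat \<Rightarrow> real" where
  "Gs a b lam s z = b ^ s * a ^ (lam 1 - max z (lam (s + 2))) * cf b s z"

lemma sum_rev_interval:
  fixes f :: "nat \<Rightarrow> real"
  assumes "L \<le> U"
  shows "(\<Sum>z\<in>{L<..U}. f z) = (\<Sum>l<U - L. f (U - l))"
  by (rule sum.reindex_bij_witness[where i="\<lambda>z. U - z" and j="\<lambda>l. U - l"]) (use assms in auto)

lemma Gs_total: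
  assumes d1: "lam (s + 2) \<le> lam (s + 1)" and d2: "lam (s + 1) \<le> lam 1"
  shows "(\<Sum>z\<le>lam (s + 1). Gs a b lam s z) = Aentry lam a b 1 (s + 1)"
proof -
  define L where "L = lam (s + 2)"
  define U where "U = lam (s + 1)"
  define W where "W = lam 1"
  have LU: "L \<le> U" and UW: "U \<le> W" using d1 d2 by (simp_all add: L_def U_def W_def)
  have gs: "\<And>z. Gs a b lam s z = b ^ s * a ^ (W - max z L) * cf b s z"
    by (simp add: Gs_def W_def L_def)
  have split: "{..U} = {..L} \<union> {L<..U}" using LU by auto
  have "(\<Sum>z\<le>U. Gs a b lam s z) = (\<Sum>z\<le>L. Gs a b lam s z) + (\<Sum>z\<in>{L<..U}. Gs a b lam s z)"
    unfolding split by (rule sum.union_disjoint) auto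
  also have "(\<Sum>z\<le>L. Gs a b lam s z) = b ^ s * a ^ (W - L) * (\<Sum>z<Suc L. cf b s z)"
    unfolding sum_distrib_left lessThan_Suc_atMost
    by (rule sum.cong) (auto simp: Gs_def L_def W_def max_def)
  also have "(\<Sum>z<Suc L. cf b s z) = cbinom L (int s) + b * cbinom L (int s + 1)"
    by (simp only: cf_sum) (simp add: cf_def, metis add.commute)
  also have "(\<Sum>z\<in>{L<..U}. Gs a b lam s z) = (\<Sum>l<U - L. Gs a b lam s (U - l))"
    by (rule sum_rev_interval[OF LU])
  also have "\<dots> = b ^ s * a ^ (W - U) * (\<Sum>l<U - L. a ^ l * (cbinom (U - l - 1) (int s - 1) + b * cbinom (U - l - 1) (int s)))"
    unfolding sum_distrib_left
  proof (rule sum.cong[OF refl])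
    fix l assume l: "l \<in> {..<U - L}"
    then have "max (U - l) L = U - l" "W - (U - l) = (W - U) + l" "U - l \<noteq> 0" using LU UW by auto
    then show "Gs a b lam s (U - l) = b ^ s * a ^ (W - U) * (a ^ l * (cbinom (U - l - 1) (int s - 1) + b * cbinom (U - l - 1) (int s)))"
      unfolding gs by (simp add: cf_def power_add)
  qed
  finally have lhs: "(\<Sum>z\<le>U. Gs a b lam s z) = b ^ s * a ^ (W - L) * (cbinom L (int s) + b * cbinom L (int s + 1)) +
      b ^ s * a ^ (W - U) * (\<Sum>l<U - L. a ^ l * (cbinom (U - l - 1) (int s - 1) + b * cbinom (U - l - 1) (int s)))" .
  have eqL: "lam (s + 1 + 1) = L" by (simp add: L_def)
  have eqU: "lam (s + 1) = U" by (simp add: U_def)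
  have eqW: "lam 1 = W" by (simp add: W_def)
  have e1: "int W - int L = int (W - L)" using LU UW by simp
  have e2: "int W - int U = int (W - U)" using LU UW by simp
  have e3: "int (s + 1) - int 1 = int s" by simp
  have "Aentry lam a b 1 (s + 1) = b ^ s * a ^ (W - L) * (cbinom L (int s) + b * cbinom L (int s + 1)) +
      b ^ s * a ^ (W - U) * (\<Sum>l<U - L. a ^ l * (cbinom (U - l - 1) (int s - 1) + b * cbinom (U - l - 1) (int s)))"
    unfolding Aentry_def eqL eqU eqW e1 e2 e3 power_int_of_nat by (rule refl)
  then have "(\<Sum>z\<le>U. Gs a b lam s z) = Aentry lam a b 1 (s + 1)" using lhs by (rule trans[OF _ sym, rotated])
  then show ?thesis unfolding eqU .
qed




lemma step_G:
  assumes "z \<le> L2" "L2 \<le> U" "L3 \<le> L2" "L2 \<le> W" "L2 = lam (s + 2)" "W = lam 1"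
  shows "(\<Sum>y<min (Suc U) z. Gs a b lam s y) * phi a b L2 L3 z = b ^ Suc s * a ^ (W - max z L3) * cf b (Suc s) z"
proof -
  have m: "min (Suc U) z = z" using assms by simp
  have "(\<Sum>y<z. Gs a b lam s y) = (\<Sum>y<z. b ^ s * a ^ (W - L2) * cf b s y)"
    by (rule sum.cong) (use assms in \<open>auto simp: Gs_def max_def\<close>)
  also have "\<dots> = b ^ s * a ^ (W - L2) * cf b (Suc s) z" by (simp add: sum_distrib_left[symmetric] cf_sum)
  finally have S: "(\<Sum>y<min (Suc U) z. Gs a b lam s y) = b ^ s * a ^ (W - L2) * cf b (Suc s) z" using m by simp
  show ?thesis
  proof (cases "z = 0")
    case True then show ?thesis using S by (simp add: cf_def)
  next
    case False
    have e: "W - max z L3 = (W - L2) + (L2 - max z L3)" using assms by simp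
    show ?thesis using S False unfolding e by (simp add: phi_def power_add)
  qed
qed

lemma Tt_eval:
  assumes dec: "\<And>i j. 1 \<le> i \<Longrightarrow> i \<le> j \<Longrightarrow> j \<le> s + t + 2 \<Longrightarrow> lam j \<le> lam i"
  shows "Tt a b t (Gs a b lam s) (lam (s + 1)) (\<lambda>i. lam (i + (s + 1))) = Aentry lam a b 1 (s + t + 1)"
  using dec
proof (induction t arbitrary: s)
  case 0
  then show ?case using Gs_total[of lam s a b] by simp
next
  case (Suc t)
  have d1: "lam (s + 2) \<le> lam (s + 1)" "lam (s + 3) \<le> lam (s + 2)" "lam (s + 2) \<le> lam 1"
    using Suc.prems by auto
  have "Tt a b (Suc t) (Gs a b lam s) (lam (s + 1)) (\<lambda>i. lam (i + (s + 1))) =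
        Tt a b t (\<lambda>z. (\<Sum>y<min (Suc (lam (s + 1))) z. Gs a b lam s y) * phi a b (lam (s + 2)) (lam (s + 3)) z)
          (lam (Suc s + 1)) (\<lambda>i. lam (i + (Suc s + 1)))"
    by (simp add: numeral_eq_Suc add.commute)
  also have "\<dots> = Tt a b t (Gs a b lam (Suc s)) (lam (Suc s + 1)) (\<lambda>i. lam (i + (Suc s + 1)))"
  proof (rule Tt_cong)
    fix y assume y: "y \<le> lam (Suc s + 1)"
    show "(\<Sum>ya<min (Suc (lam (s + 1))) y. Gs a b lam s ya) * phi a b (lam (s + 2)) (lam (s + 3)) y = Gs a b lam (Suc s) y"
      using step_G[of y "lam (s+2)" "lam (s+1)" "lam (s+3)" "lam 1" lam s a b] y d1
      by (simp add: Gs_def numeral_eq_Suc)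
  qed
  also have "\<dots> = Aentry lam a b 1 (Suc s + t + 1)"
    by (rule Suc.IH) (use Suc.prems in auto)
  finally show ?case by simp
qed




lemma DD_expand:
  assumes dec: "\<And>i j. 1 \<le> i \<Longrightarrow> i \<le> j \<Longrightarrow> j \<le> m + 2 \<Longrightarrow> lam j \<le> lam i"
  shows "DD a b (Suc m) lam = (\<Sum>j\<le>m. (-1)^j * Aentry lam a b 1 (j + 1) * DD a b (m - j) (\<lambda>i. lam (i + (j + 1))))"
proof -
  let ?G = "\<lambda>v. phi a b (lam 1) (lam 2) v"
  have "DD a b (Suc m) lam = (\<Sum>v\<le>lam 1. ?G v * CC a b m (\<lambda>i. lam (Suc i)) v)"
    by (simp add: DD_def)
  also have "\<dots> = (\<Sum>j\<le>m. (-1)^j * Tt a b j ?G (lam 1) (\<lambda>i. lam (Suc i)) * DD a b (m - j) (\<lambda>i. lam (Suc (i + j))))"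
    by (rule IE)
  also have "\<dots> = (\<Sum>j\<le>m. (-1)^j * Aentry lam a b 1 (j + 1) * DD a b (m - j) (\<lambda>i. lam (i + (j + 1))))"
  proof (rule sum.cong[OF refl])
    fix j assume j: "j \<in> {..m}"
    have G: "?G = Gs a b lam 0"
      by (intro ext) (simp add: phi_def Gs_def cf_def cbinom_def numeral_2_eq_2)
    have "Tt a b j ?G (lam 1) (\<lambda>i. lam (Suc i)) = Tt a b j (Gs a b lam 0) (lam (0 + 1)) (\<lambda>i. lam (i + (0 + 1)))"
      unfolding G by simp
    also have "\<dots> = Aentry lam a b 1 (0 + j + 1)"
      by (rule Tt_eval) (use j dec in auto)
    finally have T: "Tt a b j ?G (lam 1) (\<lambda>i. lam (Suc i)) = Aentry lam a b 1 (j + 1)" by simp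
    have L: "(\<lambda>i. lam (Suc (i + j))) = (\<lambda>i. lam (i + (j + 1)))" by (simp add: ac_simps)
    show "(-1)^j * Tt a b j ?G (lam 1) (\<lambda>i. lam (Suc i)) * DD a b (m - j) (\<lambda>i. lam (Suc (i + j))) =
          (-1)^j * Aentry lam a b 1 (j + 1) * DD a b (m - j) (\<lambda>i. lam (i + (j + 1)))"
      unfolding T L ..
  qed
  finally show ?thesis .
qed

lemma hess_det:
  fixes F :: "nat \<Rightarrow> nat \<Rightarrow> real"
  assumes sub: "\<And>i. F (Suc i) i = 1" and zero: "\<And>i j. Suc j < i \<Longrightarrow> F i j = 0"
  shows "det (mat (Suc m) (Suc m) (\<lambda>(i, j). if i = 0 then G j else F i j)) =
    (\<Sum>j\<le>m. (-1)^j * G j * det (mat (m - j) (m - j) (\<lambda>(i, j'). F (i + Suc j) (j' + Suc j))))"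
  using sub zero
proof (induction m arbitrary: F G)
  case 0
  let ?A = "mat (Suc 0) (Suc 0) (\<lambda>(i, j). if i = 0 then G j else F i j)"
  have A: "?A \<in> carrier_mat (Suc 0) (Suc 0)" by simp
  have "det ?A = (\<Sum>i<Suc 0. ?A $$ (i, 0) * cofactor ?A i 0)"
    by (rule laplace_expansion_column[OF A]) simp
  also have "\<dots> = G 0" unfolding cofactor_def
    using mat_delete_carrier[OF A, of 0 0] by simp
  finally show ?case by simp
next
  case (Suc m)
  let ?A = "mat (Suc (Suc m)) (Suc (Suc m)) (\<lambda>(i, j). if i = 0 then G j else F i j)"
  have A: "?A \<in> carrier_mat (Suc (Suc m)) (Suc (Suc m))" by simp
  have "det ?A = (\<Sum>i<Suc (Suc m). ?A $$ (i, 0) * cofactor ?A i 0)"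
    by (rule laplace_expansion_column[OF A]) simp
  also have "\<dots> = ?A $$ (0, 0) * cofactor ?A 0 0 + ?A $$ (1, 0) * cofactor ?A 1 0"
  proof -
    have "(\<Sum>i<Suc (Suc m). ?A $$ (i, 0) * cofactor ?A i 0) =
          (\<Sum>i\<in>{0, 1}. ?A $$ (i, 0) * cofactor ?A i 0)"
      by (rule sum.mono_neutral_right) (use Suc.prems in auto)
    then show ?thesis by simp
  qed
  finally have lap: "det ?A = ?A $$ (0, 0) * cofactor ?A 0 0 + ?A $$ (1, 0) * cofactor ?A 1 0" .
  have md0: "mat_delete ?A 0 0 = mat (Suc m) (Suc m) (\<lambda>(i, j). F (Suc i) (Suc j))"
    by (rule eq_matI) (auto simp: mat_delete_def)
  have md1: "mat_delete ?A 1 0 = mat (Suc m) (Suc m) (\<lambda>(i, j). if i = 0 then G (Suc j) else F (Suc i) (Suc j))"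
    by (rule eq_matI) (auto simp: mat_delete_def)
  have IH: "det (mat (Suc m) (Suc m) (\<lambda>(i, j). if i = 0 then G (Suc j) else F (Suc i) (Suc j))) =
     (\<Sum>j\<le>m. (-1)^j * G (Suc j) * det (mat (m - j) (m - j) (\<lambda>(i, j'). F (Suc (i + Suc j)) (Suc (j' + Suc j)))))"
    using Suc.IH[where F="\<lambda>i j. F (Suc i) (Suc j)" and G="\<lambda>j. G (Suc j)"] Suc.prems by simp
  have eq: "det ?A = G 0 * det (mat (Suc m) (Suc m) (\<lambda>(i, j). F (Suc i) (Suc j))) -
     (\<Sum>j\<le>m. (-1)^j * G (Suc j) * det (mat (m - j) (m - j) (\<lambda>(i, j'). F (Suc (i + Suc j)) (Suc (j' + Suc j)))))"
    using lap md0 md1 IH Suc.prems by (simp add: cofactor_def)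
  have "(\<Sum>j\<le>Suc m. (-1)^j * G j * det (mat (Suc m - j) (Suc m - j) (\<lambda>(i, j'). F (i + Suc j) (j' + Suc j)))) =
     G 0 * det (mat (Suc m) (Suc m) (\<lambda>(i, j'). F (i + Suc 0) (j' + Suc 0))) +
     (\<Sum>j\<le>m. (-1)^(Suc j) * G (Suc j) * det (mat (m - j) (m - j) (\<lambda>(i, j'). F (i + Suc (Suc j)) (j' + Suc (Suc j)))))"
    by (subst sum.atMost_Suc_shift) simp
  also have "\<dots> = det ?A"
    unfolding eq by (simp add: sum_negf[symmetric])
  finally show ?case by simp
qed

lemma Aentry_shift: "Aentry lam a b (i + s) (j + s) = Aentry (\<lambda>x. lam (x + s)) a b i j"
proof -
  have e: "int (j + s) - int (i + s) = int j - int i" by simp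
  have f: "lam (j + s + 1) = lam (j + 1 + s)" by (simp add: ac_simps)
  show ?thesis unfolding Aentry_def e f by simp
qed

lemma Aentry_sub: "b \<noteq> 0 \<Longrightarrow> Aentry lam a b (Suc J) J = 1"
proof -
  assume b: "b \<noteq> 0"
  have e: "int J - int (Suc J) = -1" by simp
  show ?thesis unfolding Aentry_def e using b by (simp add: cbinom_def power_int_minus)
qed

lemma Aentry_zero: "Suc J < I \<Longrightarrow> Aentry lam a b I J = 0"
  unfolding Aentry_def cbinom_def by simp

definition Det :: "real \<Rightarrow> real \<Rightarrow> nat \<Rightarrow> (nat \<Rightarrow> nat) \<Rightarrow> real" where
  "Det a b k lam = det (mat k k (\<lambda>(i, j). Aentry lam a b (i + 1) (j + 1)))"

lemma Det_expand:
  assumes b: "b \<noteq> 0"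
  shows "Det a b (Suc m) lam = (\<Sum>j\<le>m. (-1)^j * Aentry lam a b 1 (j + 1) * Det a b (m - j) (\<lambda>i. lam (i + (j + 1))))"
proof -
  let ?F = "\<lambda>i j. Aentry lam a b (i + 1) (j + 1)"
  have "mat (Suc m) (Suc m) (\<lambda>(i, j). Aentry lam a b (i + 1) (j + 1)) =
        mat (Suc m) (Suc m) (\<lambda>(i, j). if i = 0 then ?F 0 j else ?F i j)"
    by (rule eq_matI) auto
  then have "Det a b (Suc m) lam = (\<Sum>j\<le>m. (-1)^j * ?F 0 j * det (mat (m - j) (m - j) (\<lambda>(i, j'). ?F (i + Suc j) (j' + Suc j))))"
    unfolding Det_def
    by (simp only:) (rule hess_det, use b Aentry_sub Aentry_zero in auto)
  also have "\<dots> = (\<Sum>j\<le>m. (-1)^j * Aentry lam a b 1 (j + 1) * Det a b (m - j) (\<lambda>i. lam (i + (j + 1))))"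
  proof (rule sum.cong[OF refl])
    fix j
    have "mat (m - j) (m - j) (\<lambda>(i, j'). ?F (i + Suc j) (j' + Suc j)) =
          mat (m - j) (m - j) (\<lambda>(i, j'). Aentry (\<lambda>i. lam (i + (j + 1))) a b (i + 1) (j' + 1))"
    proof (rule eq_matI)
      fix i j' assume "i < dim_row (mat (m - j) (m - j) (\<lambda>(i, j'). Aentry (\<lambda>i. lam (i + (j + 1))) a b (i + 1) (j' + 1)))"
        "j' < dim_col (mat (m - j) (m - j) (\<lambda>(i, j'). Aentry (\<lambda>i. lam (i + (j + 1))) a b (i + 1) (j' + 1)))"
      then show "mat (m - j) (m - j) (\<lambda>(i, j'). ?F (i + Suc j) (j' + Suc j)) $$ (i, j') =
          mat (m - j) (m - j) (\<lambda>(i, j'). Aentry (\<lambda>i. lam (i + (j + 1))) a b (i + 1) (j' + 1)) $$ (i, j')"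
        using Aentry_shift[of lam a b "i + 1" "j + 1" "j' + 1"] by (simp add: ac_simps)
    qed auto
    then show "(-1)^j * ?F 0 j * det (mat (m - j) (m - j) (\<lambda>(i, j'). ?F (i + Suc j) (j' + Suc j))) =
          (-1)^j * Aentry lam a b 1 (j + 1) * Det a b (m - j) (\<lambda>i. lam (i + (j + 1)))"
      unfolding Det_def by simp
  qed
  finally show ?thesis .
qed

lemma Det_DD:
  assumes b: "b \<noteq> 0"
  shows "(\<And>i j. 1 \<le> i \<Longrightarrow> i \<le> j \<Longrightarrow> j \<le> k \<Longrightarrow> lam j \<le> lam i) \<Longrightarrow> lam (k + 1) = 0 \<Longrightarrow>
    Det a b k lam = DD a b k lam"
proof (induction k arbitrary: lam rule: less_induct)
  case (less k)
  show ?case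
  proof (cases k)
    case 0
    then show ?thesis by (simp add: Det_def DD_def)
  next
    case (Suc m)
    have dec2: "\<And>i j. 1 \<le> i \<Longrightarrow> i \<le> j \<Longrightarrow> j \<le> m + 2 \<Longrightarrow> lam j \<le> lam i"
    proof -
      fix i j assume "1 \<le> i" "i \<le> j" "j \<le> m + 2"
      then show "lam j \<le> lam i" using less.prems Suc
        by (cases "j = m + 2") auto
    qed
    have "Det a b k lam = (\<Sum>j\<le>m. (-1)^j * Aentry lam a b 1 (j + 1) * Det a b (m - j) (\<lambda>i. lam (i + (j + 1))))"
      using Det_expand[OF b] Suc by simp
    also have "\<dots> = (\<Sum>j\<le>m. (-1)^j * Aentry lam a b 1 (j + 1) * DD a b (m - j) (\<lambda>i. lam (i + (j + 1))))"
    proof (rule sum.cong[OF refl])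
      fix j assume j: "j \<in> {..m}"
      have "Det a b (m - j) (\<lambda>i. lam (i + (j + 1))) = DD a b (m - j) (\<lambda>i. lam (i + (j + 1)))"
      proof (rule less.IH)
        show "m - j < k" using Suc by simp
        show "\<And>i i'. 1 \<le> i \<Longrightarrow> i \<le> i' \<Longrightarrow> i' \<le> m - j \<Longrightarrow> lam (i' + (j + 1)) \<le> lam (i + (j + 1))"
          using less.prems(1) Suc j by auto
        show "lam (m - j + 1 + (j + 1)) = 0" using less.prems(2) Suc j by simp
      qed
      then show "(-1)^j * Aentry lam a b 1 (j + 1) * Det a b (m - j) (\<lambda>i. lam (i + (j + 1))) =
           (-1)^j * Aentry lam a b 1 (j + 1) * DD a b (m - j) (\<lambda>i. lam (i + (j + 1)))" by simp
    qed
    also have "\<dots> = DD a b k lam" using DD_expand[OF dec2] Suc by simp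
    finally show ?thesis .
  qed
qed




lemma mem_boxes: "(r, c) \<in> boxes k lam \<longleftrightarrow> 1 \<le> r \<and> r \<le> k \<and> 1 \<le> c \<and> c \<le> lam r"
  by (simp add: boxes_def)

lemma boxes_Sigma: "boxes k lam = (SIGMA r:{1..k}. {1..lam r})"
  by (auto simp: mem_boxes)

lemma CCT_E0: "is_CCT k lam T \<Longrightarrow> x \<notin> boxes k lam \<Longrightarrow> T x = Empty"
  unfolding is_CCT_def by blast
lemma CCT_E2: "is_CCT k lam T \<Longrightarrow> (r, c) \<in> boxes k lam \<Longrightarrow> T (r, c) = Beta \<Longrightarrow> 1 \<le> c' \<Longrightarrow> c' < c \<Longrightarrow> T (r, c') = Empty"
  unfolding is_CCT_def by blast
lemma CCT_E3: "is_CCT k lam T \<Longrightarrow> (r, c) \<in> boxes k lam \<Longrightarrow> T (r, c) = Alpha \<Longrightarrow> 1 \<le> r' \<Longrightarrow> r' < r \<Longrightarrow> T (r', c) = Empty"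
  unfolding is_CCT_def by blast
lemma CCT_E4: "is_CCT k lam T \<Longrightarrow> (r, c) \<in> boxes k lam \<Longrightarrow>
   (\<And>r'. r < r' \<Longrightarrow> (r', c) \<in> boxes k lam \<Longrightarrow> T (r', c) \<noteq> Alpha) \<Longrightarrow>
   (\<And>c'. c < c' \<Longrightarrow> (r, c') \<in> boxes k lam \<Longrightarrow> T (r, c') \<noteq> Beta) \<Longrightarrow> T (r, c) \<noteq> Empty"
  unfolding is_CCT_def by blast
lemma CCT_I:
  assumes "\<And>x. x \<notin> boxes k lam \<Longrightarrow> T x = Empty"
    and "\<And>r c c'. (r, c) \<in> boxes k lam \<Longrightarrow> T (r, c) = Beta \<Longrightarrow> 1 \<le> c' \<Longrightarrow> c' < c \<Longrightarrow> T (r, c') = Empty"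
    and "\<And>r c r'. (r, c) \<in> boxes k lam \<Longrightarrow> T (r, c) = Alpha \<Longrightarrow> 1 \<le> r' \<Longrightarrow> r' < r \<Longrightarrow> T (r', c) = Empty"
    and "\<And>r c. (r, c) \<in> boxes k lam \<Longrightarrow>
   (\<And>r'. r < r' \<Longrightarrow> (r', c) \<in> boxes k lam \<Longrightarrow> T (r', c) \<noteq> Alpha) \<Longrightarrow>
   (\<And>c'. c < c' \<Longrightarrow> (r, c') \<in> boxes k lam \<Longrightarrow> T (r, c') \<noteq> Beta) \<Longrightarrow> T (r, c) \<noteq> Empty"
  shows "is_CCT k lam T"
  unfolding is_CCT_def
  apply (intro conjI)
  subgoal using assms(1) by blast
  subgoal using assms(2) by blast
  subgoal using assms(3) by blast
  subgoal using assms(4) by blast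
  done

lemma finite_boxes[simp]: "finite (boxes k lam)"
  unfolding boxes_Sigma by auto

lemma UNIV_cell: "(UNIV :: cell set) = {Alpha, Beta, Empty}"
  by (auto intro: cell.exhaust)

lemma finite_CCT: "finite {T. is_CCT k lam T}"
proof -
  let ?B = "boxes k lam"
  let ?e = "\<lambda>g x. if x \<in> ?B then g x else Empty"
  have "{T. is_CCT k lam T} \<subseteq> ?e ` (?B \<rightarrow>\<^sub>E (UNIV :: cell set))"
  proof
    fix T assume "T \<in> {T. is_CCT k lam T}"
    then have E: "\<And>x. x \<notin> ?B \<Longrightarrow> T x = Empty" using CCT_E0 by blast
    have "T = ?e (restrict T ?B)" using E by (auto simp: restrict_def)
    moreover have "restrict T ?B \<in> ?B \<rightarrow>\<^sub>E UNIV" by simp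
    ultimately show "T \<in> ?e ` (?B \<rightarrow>\<^sub>E UNIV)" by blast
  qed
  moreover have "finite (?e ` (?B \<rightarrow>\<^sub>E (UNIV :: cell set)))"
    by (intro finite_imageI finite_PiE) (auto simp: UNIV_cell)
  ultimately show ?thesis by (rule finite_subset)
qed

definition Qw :: "real \<Rightarrow> real \<Rightarrow> nat \<Rightarrow> (nat \<Rightarrow> nat) \<Rightarrow> real" where
  "Qw a b k lam = (\<Sum>T\<in>{T. is_CCT k lam T}. a ^ num_alpha k lam T * b ^ num_beta k lam T)"

lemma boxes_cong: "(\<And>r. 1 \<le> r \<Longrightarrow> r \<le> k \<Longrightarrow> lam r = lam2 r) \<Longrightarrow> boxes k lam = boxes k lam2"
  unfolding boxes_def by auto

lemma Qw_cong:
  assumes "\<And>r. 1 \<le> r \<Longrightarrow> r \<le> k \<Longrightarrow> lam r = lam2 r"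
  shows "Qw a b k lam = Qw a b k lam2"
proof -
  have B: "boxes k lam = boxes k lam2" by (rule boxes_cong) (rule assms)
  show ?thesis unfolding Qw_def is_CCT_def num_alpha_def num_beta_def B ..
qed

lemma Qw_empty:
  assumes "\<And>r. 1 \<le> r \<Longrightarrow> r \<le> k \<Longrightarrow> lam r = 0"
  shows "Qw a b k lam = 1"
proof -
  have B: "boxes k lam = {}" using assms by (fastforce simp: mem_boxes)
  have "is_CCT k lam T \<longleftrightarrow> T = (\<lambda>_. Empty)" for T
  proof
    assume "is_CCT k lam T" then show "T = (\<lambda>_. Empty)" using CCT_E0 B by fastforce
  next
    assume "T = (\<lambda>_. Empty)" then show "is_CCT k lam T" by (intro CCT_I) (auto simp: B)
  qed
  then have "{T. is_CCT k lam T} = {\<lambda>_. Empty}" by auto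
  then show ?thesis unfolding Qw_def num_alpha_def num_beta_def B by simp
qed




context
  fixes k' :: nat and lam :: "nat \<Rightarrow> nat" and h M :: nat
  assumes dec: "\<And>i j. 1 \<le> i \<Longrightarrow> i \<le> j \<Longrightarrow> j \<le> Suc k' \<Longrightarrow> lam j \<le> lam i"
    and Mdef: "M = lam 1" and Mpos: "0 < M"
    and h1: "1 \<le> h" and hk: "h \<le> Suc k'" and lamh: "lam h = M"
    and after: "\<And>r. h < r \<Longrightarrow> r \<le> Suc k' \<Longrightarrow> lam r < M"
begin

lemma le_M: "(r, c) \<in> boxes (Suc k') lam \<Longrightarrow> c \<le> M"
  using dec[of 1 r] Mdef by (auto simp: mem_boxes)

lemma colM: "(r, M) \<in> boxes (Suc k') lam \<longleftrightarrow> 1 \<le> r \<and> r \<le> h"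
proof
  assume A: "(r, M) \<in> boxes (Suc k') lam"
  then have "1 \<le> r" "r \<le> Suc k'" "M \<le> lam r" by (auto simp: mem_boxes)
  then show "1 \<le> r \<and> r \<le> h" using after[of r] by (cases "h < r") auto
next
  assume "1 \<le> r \<and> r \<le> h"
  then show "(r, M) \<in> boxes (Suc k') lam"
    using dec[of r h] lamh hk Mpos by (auto simp: mem_boxes)
qed

lemma hM: "(h, M) \<in> boxes (Suc k') lam" using colM h1 by simp

lemma lam_le_h: "1 \<le> r \<Longrightarrow> r \<le> h \<Longrightarrow> lam r = M"
  using dec[of r h] dec[of 1 r] lamh Mdef hk by fastforce

definition "lamA = (\<lambda>r. if r \<le> h then lam r - 1 else lam r)"

lemma memA: "(r, c) \<in> boxes (Suc k') lamA \<longleftrightarrow> (r, c) \<in> boxes (Suc k') lam \<and> c \<noteq> M"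
proof (cases "r \<le> h")
  case True
  show ?thesis
  proof (cases "1 \<le> r")
    case True
    then have "lam r = M" using lam_le_h \<open>r \<le> h\<close> by simp
    then show ?thesis using \<open>r \<le> h\<close> True hk by (auto simp: mem_boxes lamA_def)
  next
    case False then show ?thesis by (auto simp: mem_boxes lamA_def)
  qed
next
  case False
  then show ?thesis using after[of r] by (auto simp: mem_boxes lamA_def)
qed

lemma alpha_colE:
  assumes T: "is_CCT (Suc k') lam T" and Ta: "T (h, M) = Alpha" and r: "r \<noteq> h"
  shows "T (r, M) = Empty"
proof (cases "(r, M) \<in> boxes (Suc k') lam")
  case True
  then have "1 \<le> r" "r < h" using colM r by auto
  then show ?thesis using CCT_E3[OF T hM Ta] by simp
next
  case False then show ?thesis using CCT_E0[OF T] by simp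
qed

lemma alpha_fwd:
  assumes T: "is_CCT (Suc k') lam T" and Ta: "T (h, M) = Alpha"
  shows "is_CCT (Suc k') lamA (T((h, M) := Empty))"
proof (rule CCT_I)
  let ?T = "T((h, M) := Empty)"
  show "?T x = Empty" if x: "x \<notin> boxes (Suc k') lamA" for x
  proof (cases x)
    case (Pair r c)
    show ?thesis
    proof (cases "(r, c) = (h, M)")
      case True then show ?thesis using Pair by simp
    next
      case False
      then show ?thesis using x Pair memA alpha_colE[OF T Ta, of r] CCT_E0[OF T, of "(r, c)"] by auto
    qed
  qed
  show "?T (r, c') = Empty" if "(r, c) \<in> boxes (Suc k') lamA" "?T (r, c) = Beta" "1 \<le> c'" "c' < c" for r c c'
  proof -
    have "(r, c) \<noteq> (h, M)" using that by auto
    then have "T (r, c) = Beta" "(r, c) \<in> boxes (Suc k') lam" using that memA by auto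
    then have "T (r, c') = Empty" using CCT_E2[OF T] that by blast
    then show ?thesis by simp
  qed
  show "?T (r', c) = Empty" if "(r, c) \<in> boxes (Suc k') lamA" "?T (r, c) = Alpha" "1 \<le> r'" "r' < r" for r c r'
  proof -
    have "(r, c) \<noteq> (h, M)" using that by auto
    then have "T (r, c) = Alpha" "(r, c) \<in> boxes (Suc k') lam" using that memA by auto
    then have "T (r', c) = Empty" using CCT_E3[OF T] that by blast
    then show ?thesis by simp
  qed
  show "?T (r, c) \<noteq> Empty" if rc: "(r, c) \<in> boxes (Suc k') lamA"
    and HA: "\<And>r'. r < r' \<Longrightarrow> (r', c) \<in> boxes (Suc k') lamA \<Longrightarrow> ?T (r', c) \<noteq> Alpha"
    and HB: "\<And>c'. c < c' \<Longrightarrow> (r, c') \<in> boxes (Suc k') lamA \<Longrightarrow> ?T (r, c') \<noteq> Beta" for r c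
  proof -
    have rc': "(r, c) \<in> boxes (Suc k') lam" and cM: "c \<noteq> M" using rc memA by auto
    have "T (r, c) \<noteq> Empty"
    proof (rule CCT_E4[OF T rc'])
      fix r' assume "r < r'" "(r', c) \<in> boxes (Suc k') lam"
      then show "T (r', c) \<noteq> Alpha" using HA[of r'] memA cM by auto
    next
      fix c' assume cc: "c < c'" "(r, c') \<in> boxes (Suc k') lam"
      show "T (r, c') \<noteq> Beta"
      proof (cases "c' = M")
        case True
        then show ?thesis using Ta alpha_colE[OF T Ta, of r] by (cases "r = h") auto
      next
        case False
        then show ?thesis using HB[of c'] cc memA by auto
      qed
    qed
    then show ?thesis using cM by simp
  qed
qed

lemma alpha_bwd:
  assumes T: "is_CCT (Suc k') lamA T"
  shows "is_CCT (Suc k') lam (T((h, M) := Alpha))"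
proof -
  have colE: "T (r, M) = Empty" for r using CCT_E0[OF T, of "(r, M)"] memA by simp
  let ?T = "T((h, M) := Alpha)"
  show ?thesis
  proof (rule CCT_I)
    show "?T x = Empty" if x: "x \<notin> boxes (Suc k') lam" for x
    proof -
      have "x \<noteq> (h, M)" using x hM by auto
      moreover have "x \<notin> boxes (Suc k') lamA" using x memA by (cases x) auto
      ultimately show ?thesis using CCT_E0[OF T] by simp
    qed
    show "?T (r, c') = Empty" if rc: "(r, c) \<in> boxes (Suc k') lam" "?T (r, c) = Beta" "1 \<le> c'" "c' < c" for r c c'
    proof -
      have ne: "(r, c) \<noteq> (h, M)" using rc by auto
      then have Tb: "T (r, c) = Beta" by (metis rc(2) fun_upd_other)
      then have "(r, c) \<in> boxes (Suc k') lamA" using CCT_E0[OF T, of "(r, c)"] by auto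
      then have "T (r, c') = Empty" using CCT_E2[OF T _ Tb] rc by blast
      moreover have "c' \<noteq> M" using le_M[OF rc(1)] rc by simp
      ultimately show ?thesis by simp
    qed
    show "?T (r', c) = Empty" if rc: "(r, c) \<in> boxes (Suc k') lam" "?T (r, c) = Alpha" "1 \<le> r'" "r' < r" for r c r'
    proof (cases "(r, c) = (h, M)")
      case True
      then show ?thesis using colE rc by auto
    next
      case False
      then have Ta: "T (r, c) = Alpha" by (metis rc(2) fun_upd_other)
      then have B: "(r, c) \<in> boxes (Suc k') lamA" using CCT_E0[OF T, of "(r, c)"] by auto
      then have "c \<noteq> M" using memA by simp
      then show ?thesis using CCT_E3[OF T B Ta] rc by simp
    qed
    show "?T (r, c) \<noteq> Empty" if rc: "(r, c) \<in> boxes (Suc k') lam"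
      and HA: "\<And>r'. r < r' \<Longrightarrow> (r', c) \<in> boxes (Suc k') lam \<Longrightarrow> ?T (r', c) \<noteq> Alpha"
      and HB: "\<And>c'. c < c' \<Longrightarrow> (r, c') \<in> boxes (Suc k') lam \<Longrightarrow> ?T (r, c') \<noteq> Beta" for r c
    proof (cases "c = M")
      case True
      show ?thesis
      proof (cases "r = h")
        case True then show ?thesis using \<open>c = M\<close> by simp
      next
        case False
        then have "r < h" using rc colM \<open>c = M\<close> by auto
        then have "?T (h, c) \<noteq> Alpha" using HA[of h] hM \<open>c = M\<close> by simp
        then show ?thesis using \<open>c = M\<close> by simp
      qed
    next
      case False
      then have B: "(r, c) \<in> boxes (Suc k') lamA" using rc memA by simp
      have "T (r, c) \<noteq> Empty"
      proof (rule CCT_E4[OF T B])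
        fix r' assume "r < r'" "(r', c) \<in> boxes (Suc k') lamA"
        then show "T (r', c) \<noteq> Alpha" using HA[of r'] memA False by auto
      next
        fix c' assume "c < c'" "(r, c') \<in> boxes (Suc k') lamA"
        then show "T (r, c') \<noteq> Beta" using HB[of c'] memA by auto
      qed
      then show ?thesis using False by simp
    qed
  qed
qed

lemma alpha_na:
  assumes T: "is_CCT (Suc k') lam T" and Ta: "T (h, M) = Alpha"
  shows "num_alpha (Suc k') lam T = Suc (num_alpha (Suc k') lamA (T((h, M) := Empty)))"
proof -
  let ?T = "T((h, M) := Empty)"
  have "{x \<in> boxes (Suc k') lam. T x = Alpha} = insert (h, M) {x \<in> boxes (Suc k') lamA. ?T x = Alpha}"
  proof (rule Set.set_eqI, rule iffI)
    fix x assume x: "x \<in> {x \<in> boxes (Suc k') lam. T x = Alpha}"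
    obtain r c where xe: "x = (r, c)" by (cases x)
    show "x \<in> insert (h, M) {x \<in> boxes (Suc k') lamA. ?T x = Alpha}"
    proof (cases "c = M")
      case True
      then have "r = h" using alpha_colE[OF T Ta, of r] x xe by (cases "r = h") auto
      then show ?thesis using xe True by simp
    next
      case False then show ?thesis using x xe memA by auto
    qed
  next
    fix x assume "x \<in> insert (h, M) {x \<in> boxes (Suc k') lamA. ?T x = Alpha}"
    then show "x \<in> {x \<in> boxes (Suc k') lam. T x = Alpha}" using hM Ta memA
      by (cases x) (auto split: if_splits)
  qed
  moreover have "(h, M) \<notin> {x \<in> boxes (Suc k') lamA. ?T x = Alpha}" using memA by simp
  ultimately show ?thesis unfolding num_alpha_def by simp
qed

lemma alpha_nb:
  assumes T: "is_CCT (Suc k') lam T" and Ta: "T (h, M) = Alpha"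
  shows "num_beta (Suc k') lam T = num_beta (Suc k') lamA (T((h, M) := Empty))"
proof -
  let ?T = "T((h, M) := Empty)"
  have "{x \<in> boxes (Suc k') lam. T x = Beta} = {x \<in> boxes (Suc k') lamA. ?T x = Beta}"
  proof (rule Set.set_eqI, rule iffI)
    fix x assume x: "x \<in> {x \<in> boxes (Suc k') lam. T x = Beta}"
    obtain r c where xe: "x = (r, c)" by (cases x)
    have "c \<noteq> M" using alpha_colE[OF T Ta, of r] x xe Ta by (cases "r = h") auto
    then show "x \<in> {x \<in> boxes (Suc k') lamA. ?T x = Beta}" using x xe memA by auto
  next
    fix x assume "x \<in> {x \<in> boxes (Suc k') lamA. ?T x = Beta}"
    then show "x \<in> {x \<in> boxes (Suc k') lam. T x = Beta}" using memA
      by (cases x) (auto split: if_splits)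
  qed
  then show ?thesis unfolding num_beta_def by simp
qed


definition "fB r = (if r < h then r else Suc r)"
definition "gB r = (if r < h then r else r - 1)"
definition "lamD = (\<lambda>r. lam (fB r))"
definition "fwdB T = (\<lambda>x. T (fB (fst x), snd x))"
definition "bwdB T = (\<lambda>x. if fst x = h then (if snd x = M then Beta else Empty) else T (gB (fst x), snd x))"

lemma fB_ne: "fB r \<noteq> h" by (simp add: fB_def)
lemma gB_fB: "gB (fB r) = r" by (simp add: fB_def gB_def)
lemma fB_gB: "r \<noteq> h \<Longrightarrow> fB (gB r) = r" by (auto simp: fB_def gB_def)
lemma fB_mono: "fB r < fB r' \<longleftrightarrow> r < r'" by (auto simp: fB_def)
lemma fB_pos: "1 \<le> r \<Longrightarrow> 1 \<le> fB r" by (simp add: fB_def)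
lemma gB_pos: "1 \<le> r \<Longrightarrow> r \<noteq> h \<Longrightarrow> 1 \<le> gB r" using h1 by (auto simp: gB_def)
lemma fB_0: "fB 0 = 0" using h1 by (simp add: fB_def)

lemma memD: "(r, c) \<in> boxes k' lamD \<longleftrightarrow> (fB r, c) \<in> boxes (Suc k') lam"
proof (cases "r = 0")
  case True then show ?thesis by (simp add: mem_boxes fB_0)
next
  case False
  then show ?thesis using hk by (auto simp: mem_boxes lamD_def fB_def)
qed

lemma memD': "r \<noteq> h \<Longrightarrow> (r, c) \<in> boxes (Suc k') lam \<longleftrightarrow> (gB r, c) \<in> boxes k' lamD"
  using memD[of "gB r" c] fB_gB by simp

lemma beta_rowE:
  assumes T: "is_CCT (Suc k') lam T" and Tb: "T (h, M) = Beta" and c: "c \<noteq> M"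
  shows "T (h, c) = Empty"
proof (cases "(h, c) \<in> boxes (Suc k') lam")
  case True
  have "c \<le> M" using le_M[OF True] .
  moreover have "1 \<le> c" using True by (simp add: mem_boxes)
  ultimately show ?thesis using CCT_E2[OF T hM Tb, of c] c by simp
next
  case False then show ?thesis using CCT_E0[OF T] by simp
qed

lemma beta_fwd:
  assumes T: "is_CCT (Suc k') lam T" and Tb: "T (h, M) = Beta"
  shows "is_CCT k' lamD (fwdB T)"
proof (rule CCT_I)
  have rowh: "T (h, c) \<noteq> Alpha" for c using beta_rowE[OF T Tb, of c] Tb by (cases "c = M") auto
  show "fwdB T x = Empty" if "x \<notin> boxes k' lamD" for x
    using that CCT_E0[OF T, of "(fB (fst x), snd x)"] memD[of "fst x" "snd x"] by (simp add: fwdB_def)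
  show "fwdB T (r, c') = Empty" if "(r, c) \<in> boxes k' lamD" "fwdB T (r, c) = Beta" "1 \<le> c'" "c' < c" for r c c'
    using that CCT_E2[OF T, of "fB r" c c'] memD by (simp add: fwdB_def)
  show "fwdB T (r', c) = Empty" if "(r, c) \<in> boxes k' lamD" "fwdB T (r, c) = Alpha" "1 \<le> r'" "r' < r" for r c r'
    using that CCT_E3[OF T, of "fB r" c "fB r'"] memD fB_mono fB_pos by (simp add: fwdB_def)
  show "fwdB T (r, c) \<noteq> Empty" if rc: "(r, c) \<in> boxes k' lamD"
    and HA: "\<And>r'. r < r' \<Longrightarrow> (r', c) \<in> boxes k' lamD \<Longrightarrow> fwdB T (r', c) \<noteq> Alpha"
    and HB: "\<And>c'. c < c' \<Longrightarrow> (r, c') \<in> boxes k' lamD \<Longrightarrow> fwdB T (r, c') \<noteq> Beta" for r c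
  proof -
    have "T (fB r, c) \<noteq> Empty"
    proof (rule CCT_E4[OF T])
      show "(fB r, c) \<in> boxes (Suc k') lam" using rc memD by simp
    next
      fix r'' assume r'': "fB r < r''" "(r'', c) \<in> boxes (Suc k') lam"
      show "T (r'', c) \<noteq> Alpha"
      proof (cases "r'' = h")
        case True then show ?thesis using rowh by simp
      next
        case False
        then have e: "fB (gB r'') = r''" by (rule fB_gB)
        have "r < gB r''" using r''(1) fB_mono[of r "gB r''"] e by simp
        moreover have "(gB r'', c) \<in> boxes k' lamD" using memD[of "gB r''" c] e r''(2) by simp
        ultimately show ?thesis using HA[of "gB r''"] e by (simp add: fwdB_def)
      qed
    next
      fix c' assume "c < c'" "(fB r, c') \<in> boxes (Suc k') lam"
      then show "T (fB r, c') \<noteq> Beta" using HB[of c'] memD by (simp add: fwdB_def)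
    qed
    then show ?thesis by (simp add: fwdB_def)
  qed
qed

lemma beta_bwd:
  assumes T: "is_CCT k' lamD T"
  shows "is_CCT (Suc k') lam (bwdB T)"
proof (rule CCT_I)
  have ev: "bwdB T (r, c) = T (gB r, c)" if "r \<noteq> h" for r c using that by (simp add: bwdB_def)
  have evh: "bwdB T (h, c) = (if c = M then Beta else Empty)" for c by (simp add: bwdB_def)
  show "bwdB T x = Empty" if x: "x \<notin> boxes (Suc k') lam" for x
  proof (cases x)
    case (Pair r c)
    show ?thesis
    proof (cases "r = h")
      case True
      then have "c \<noteq> M" using x Pair hM by auto
      then show ?thesis using Pair True evh by simp
    next
      case False
      then show ?thesis using x Pair ev memD'[OF False, of c] CCT_E0[OF T, of "(gB r, c)"] by simp
    qed
  qed
  show "bwdB T (r, c') = Empty" if rc: "(r, c) \<in> boxes (Suc k') lam" "bwdB T (r, c) = Beta" "1 \<le> c'" "c' < c" for r c c'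
  proof (cases "r = h")
    case True
    then have "c' \<noteq> M" using le_M[OF rc(1)] rc by simp
    then show ?thesis using True evh by simp
  next
    case False
    then show ?thesis using rc ev memD'[OF False] CCT_E2[OF T, of "gB r" c c'] by simp
  qed
  show "bwdB T (r', c) = Empty" if rc: "(r, c) \<in> boxes (Suc k') lam" "bwdB T (r, c) = Alpha" "1 \<le> r'" "r' < r" for r c r'
  proof -
    have rh: "r \<noteq> h" using rc evh by (cases "r = h") (auto split: if_splits)
    then have Ta: "T (gB r, c) = Alpha" and B: "(gB r, c) \<in> boxes k' lamD" using rc ev memD' by auto
    show ?thesis
    proof (cases "r' = h")
      case True
      have "c \<noteq> M" using rc colM True by auto
      then show ?thesis using True evh by simp
    next
      case False
      have "gB r' < gB r" using fB_mono[of "gB r'" "gB r"] fB_gB[OF False] fB_gB[OF rh] rc by simp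
      then show ?thesis using CCT_E3[OF T B Ta, of "gB r'"] gB_pos[OF rc(3) False] ev[OF False] by simp
    qed
  qed
  show "bwdB T (r, c) \<noteq> Empty" if rc: "(r, c) \<in> boxes (Suc k') lam"
    and HA: "\<And>r'. r < r' \<Longrightarrow> (r', c) \<in> boxes (Suc k') lam \<Longrightarrow> bwdB T (r', c) \<noteq> Alpha"
    and HB: "\<And>c'. c < c' \<Longrightarrow> (r, c') \<in> boxes (Suc k') lam \<Longrightarrow> bwdB T (r, c') \<noteq> Beta" for r c
  proof (cases "r = h")
    case True
    show ?thesis
    proof (cases "c = M")
      case True then show ?thesis using \<open>r = h\<close> evh by simp
    next
      case False
      then have "c < M" using le_M[OF rc] by simp
      then have "bwdB T (h, M) \<noteq> Beta" using HB[of M] hM \<open>r = h\<close> by simp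
      then show ?thesis using evh by simp
    qed
  next
    case False
    have B: "(gB r, c) \<in> boxes k' lamD" using memD'[OF False] rc by simp
    have "T (gB r, c) \<noteq> Empty"
    proof (rule CCT_E4[OF T B])
      fix r' assume r': "gB r < r'" "(r', c) \<in> boxes k' lamD"
      have "r < fB r'" using fB_mono[of "gB r" r'] r'(1) fB_gB[OF False] by simp
      moreover have "(fB r', c) \<in> boxes (Suc k') lam" using memD r'(2) by simp
      ultimately have "bwdB T (fB r', c) \<noteq> Alpha" using HA by simp
      then show "T (r', c) \<noteq> Alpha" using ev[OF fB_ne] gB_fB by simp
    next
      fix c' assume "c < c'" "(gB r, c') \<in> boxes k' lamD"
      then show "T (gB r, c') \<noteq> Beta" using HB[of c'] memD'[OF False] ev[OF False] by simp
    qed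
    then show ?thesis using ev[OF False] by simp
  qed
qed

lemma beta_inv1:
  assumes T: "is_CCT (Suc k') lam T" and Tb: "T (h, M) = Beta"
  shows "bwdB (fwdB T) = T"
proof (rule ext)
  fix x :: "nat \<times> nat"
  obtain r c where x: "x = (r, c)" by (cases x) auto
  show "bwdB (fwdB T) x = T x"
  proof (cases "r = h")
    case True
    then show ?thesis using x Tb beta_rowE[OF T Tb, of c] by (auto simp: bwdB_def)
  next
    case False
    then show ?thesis using x fB_gB[OF False] by (simp add: bwdB_def fwdB_def)
  qed
qed

lemma beta_inv2: "fwdB (bwdB T) = T"
  by (rule ext) (simp add: bwdB_def fwdB_def fB_ne gB_fB)

lemma beta_bwd_h: "bwdB T (h, M) = Beta" by (simp add: bwdB_def)

lemma beta_na:
  assumes T: "is_CCT (Suc k') lam T" and Tb: "T (h, M) = Beta"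
  shows "num_alpha (Suc k') lam T = num_alpha k' lamD (fwdB T)"
proof -
  let ?F = "\<lambda>x. (fB (fst x), snd x)"
  have inj: "inj_on ?F A" for A :: "(nat \<times> nat) set" by (rule inj_onI) (metis gB_fB prod.collapse prod.inject)
  have "{x \<in> boxes (Suc k') lam. T x = Alpha} = ?F ` {x \<in> boxes k' lamD. fwdB T x = Alpha}"
  proof (rule Set.set_eqI, rule iffI)
    fix x assume x: "x \<in> {x \<in> boxes (Suc k') lam. T x = Alpha}"
    obtain r c where xe: "x = (r, c)" by (cases x) auto
    have rh: "r \<noteq> h" using x xe beta_rowE[OF T Tb, of c] Tb by (cases "c = M") auto
    have "(gB r, c) \<in> {x \<in> boxes k' lamD. fwdB T x = Alpha}"
      using x xe memD' rh fB_gB[OF rh] by (simp add: fwdB_def)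
    moreover have "x = ?F (gB r, c)" using xe fB_gB[OF rh] by simp
    ultimately show "x \<in> ?F ` {x \<in> boxes k' lamD. fwdB T x = Alpha}" by blast
  next
    fix x assume "x \<in> ?F ` {x \<in> boxes k' lamD. fwdB T x = Alpha}"
    then obtain r c where "x = (fB r, c)" "(r, c) \<in> boxes k' lamD" "fwdB T (r, c) = Alpha" by auto
    then show "x \<in> {x \<in> boxes (Suc k') lam. T x = Alpha}" using memD by (simp add: fwdB_def)
  qed
  then show ?thesis unfolding num_alpha_def using card_image[OF inj] by simp
qed

lemma beta_nb:
  assumes T: "is_CCT (Suc k') lam T" and Tb: "T (h, M) = Beta"
  shows "num_beta (Suc k') lam T = Suc (num_beta k' lamD (fwdB T))"
proof -
  let ?F = "\<lambda>x. (fB (fst x), snd x)"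
  have inj: "inj_on ?F A" for A :: "(nat \<times> nat) set" by (rule inj_onI) (metis gB_fB prod.collapse prod.inject)
  have eq: "{x \<in> boxes (Suc k') lam. T x = Beta} = insert (h, M) (?F ` {x \<in> boxes k' lamD. fwdB T x = Beta})"
  proof (rule Set.set_eqI, rule iffI)
    fix x assume x: "x \<in> {x \<in> boxes (Suc k') lam. T x = Beta}"
    obtain r c where xe: "x = (r, c)" by (cases x) auto
    show "x \<in> insert (h, M) (?F ` {x \<in> boxes k' lamD. fwdB T x = Beta})"
    proof (cases "r = h")
      case True
      then have "c = M" using x xe beta_rowE[OF T Tb, of c] by (cases "c = M") auto
      then show ?thesis using xe True by simp
    next
      case False
      then have rh: "r \<noteq> h" .
      have "(gB r, c) \<in> {x \<in> boxes k' lamD. fwdB T x = Beta}"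
        using x xe memD' rh fB_gB[OF rh] by (simp add: fwdB_def)
      moreover have "x = ?F (gB r, c)" using xe fB_gB[OF rh] by simp
      ultimately show ?thesis by blast
    qed
  next
    fix x assume "x \<in> insert (h, M) (?F ` {x \<in> boxes k' lamD. fwdB T x = Beta})"
    then show "x \<in> {x \<in> boxes (Suc k') lam. T x = Beta}" using memD hM Tb by (auto simp: fwdB_def)
  qed
  have nin: "(h, M) \<notin> ?F ` {x \<in> boxes k' lamD. fwdB T x = Beta}"
  proof
    assume "(h, M) \<in> ?F ` {x \<in> boxes k' lamD. fwdB T x = Beta}"
    then obtain y where "(h, M) = ?F y" by blast
    then have "h = fB (fst y)" by simp
    then show False using fB_ne by metis
  qed
  have fin: "finite (?F ` {x \<in> boxes k' lamD. fwdB T x = Beta})" by simp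
  show ?thesis unfolding num_beta_def eq using card_insert_disjoint[OF fin nin] card_image[OF inj] by simp
qed

lemma hM_nonempty:
  assumes T: "is_CCT (Suc k') lam T" shows "T (h, M) \<noteq> Empty"
proof (rule CCT_E4[OF T hM])
  fix r' assume "h < r'" "(r', M) \<in> boxes (Suc k') lam"
  then show "T (r', M) \<noteq> Alpha" using colM by simp
next
  fix c' assume "M < c'" "(h, c') \<in> boxes (Suc k') lam"
  then show "T (h, c') \<noteq> Beta" using le_M by fastforce
qed

lemma Qw_rec: "Qw a b (Suc k') lam = b * Qw a b k' lamD + a * Qw a b (Suc k') lamA"
proof -
  let ?w = "\<lambda>k l T. a ^ num_alpha k l T * b ^ num_beta k l T"
  define S where "S = {T. is_CCT (Suc k') lam T}"
  define SA where "SA = {T \<in> S. T (h, M) = Alpha}"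
  define SB where "SB = {T \<in> S. T (h, M) = Beta}"
  have SU: "S = SA \<union> SB"
  proof -
    have "T (h, M) = Alpha \<or> T (h, M) = Beta" if "T \<in> S" for T
      using hM_nonempty[of T] that by (cases "T (h, M)") (auto simp: S_def)
    then show ?thesis unfolding SA_def SB_def by auto
  qed
  have fS: "finite S" unfolding S_def by (rule finite_CCT)
  have "Qw a b (Suc k') lam = (\<Sum>T\<in>SA. ?w (Suc k') lam T) + (\<Sum>T\<in>SB. ?w (Suc k') lam T)"
    unfolding Qw_def S_def[symmetric] SU
  proof (rule sum.union_disjoint)
    show "finite SA" by (rule finite_subset[OF _ fS]) (simp add: SA_def)
    show "finite SB" by (rule finite_subset[OF _ fS]) (simp add: SB_def)
    show "SA \<inter> SB = {}" by (auto simp: SA_def SB_def)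
  qed
  also have "(\<Sum>T\<in>SA. ?w (Suc k') lam T) = (\<Sum>T\<in>SA. a * ?w (Suc k') lamA (T((h, M) := Empty)))"
    by (rule sum.cong) (auto simp: SA_def S_def alpha_na alpha_nb)
  also have "\<dots> = a * (\<Sum>T\<in>SA. ?w (Suc k') lamA (T((h, M) := Empty)))" by (simp add: sum_distrib_left)
  also have "(\<Sum>T\<in>SA. ?w (Suc k') lamA (T((h, M) := Empty))) = Qw a b (Suc k') lamA"
  proof -
    have "bij_betw (\<lambda>T. T((h, M) := Empty)) SA {T. is_CCT (Suc k') lamA T}"
    proof (rule bij_betw_byWitness[where f'="\<lambda>T. T((h, M) := Alpha)"])
      show "\<forall>T\<in>SA. (T((h, M) := Empty))((h, M) := Alpha) = T"
      proof
        fix T assume "T \<in> SA"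
        then have "T (h, M) = Alpha" by (simp add: SA_def)
        then show "(T((h, M) := Empty))((h, M) := Alpha) = T" by (simp add: fun_upd_idem)
      qed
      show "\<forall>T\<in>{T. is_CCT (Suc k') lamA T}. (T((h, M) := Alpha))((h, M) := Empty) = T"
      proof
        fix T assume "T \<in> {T. is_CCT (Suc k') lamA T}"
        then have "T (h, M) = Empty" using CCT_E0[of "Suc k'" lamA T "(h, M)"] memA by simp
        then show "(T((h, M) := Alpha))((h, M) := Empty) = T" by (simp only: fun_upd_upd) (rule fun_upd_idem)
      qed
      show "(\<lambda>T. T((h, M) := Empty)) ` SA \<subseteq> {T. is_CCT (Suc k') lamA T}"
        using alpha_fwd by (auto simp: SA_def S_def)
      show "(\<lambda>T. T((h, M) := Alpha)) ` {T. is_CCT (Suc k') lamA T} \<subseteq> SA"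
        using alpha_bwd by (auto simp: SA_def S_def)
    qed
    then show ?thesis unfolding Qw_def by (rule sum.reindex_bij_betw)
  qed
  also have "(\<Sum>T\<in>SB. ?w (Suc k') lam T) = (\<Sum>T\<in>SB. b * ?w k' lamD (fwdB T))"
    by (rule sum.cong) (auto simp: SB_def S_def beta_na beta_nb)
  also have "\<dots> = b * (\<Sum>T\<in>SB. ?w k' lamD (fwdB T))" by (simp add: sum_distrib_left)
  also have "(\<Sum>T\<in>SB. ?w k' lamD (fwdB T)) = Qw a b k' lamD"
  proof -
    have "bij_betw fwdB SB {T. is_CCT k' lamD T}"
    proof (rule bij_betw_byWitness[where f'=bwdB])
      show "\<forall>T\<in>SB. bwdB (fwdB T) = T" using beta_inv1 by (auto simp: SB_def S_def)
      show "\<forall>T\<in>{T. is_CCT k' lamD T}. fwdB (bwdB T) = T" using beta_inv2 by auto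
      show "fwdB ` SB \<subseteq> {T. is_CCT k' lamD T}" using beta_fwd by (auto simp: SB_def S_def)
      show "bwdB ` {T. is_CCT k' lamD T} \<subseteq> SB" using beta_bwd beta_bwd_h by (auto simp: SB_def S_def)
    qed
    then show ?thesis unfolding Qw_def by (rule sum.reindex_bij_betw)
  qed
  finally show ?thesis by simp
qed


lemma Qw_rec_explicit:
  "Qw a b (Suc k') lam = b * Qw a b k' (\<lambda>r. lam (if r < h then r else Suc r)) + a * Qw a b (Suc k') (\<lambda>r. if r \<le> h then lam r - 1 else lam r)"
  using Qw_rec[of a b] unfolding lamD_def lamA_def fB_def .

end



lemma CC_cong: "(\<And>r. 1 \<le> r \<Longrightarrow> mu r = mu' r) \<Longrightarrow> CC a b k mu x = CC a b k mu' x"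
proof (induction k arbitrary: mu mu' x)
  case 0 then show ?case by simp
next
  case (Suc k)
  have e1: "mu 1 = mu' 1" "mu 2 = mu' 2" "mu (Suc 0) = mu' (Suc 0)" using Suc.prems by auto
  have "CC a b k (\<lambda>i. mu (Suc i)) v = CC a b k (\<lambda>i. mu' (Suc i)) v" for v
    by (rule Suc.IH) (use Suc.prems in auto)
  then show ?case by (simp add: e1)
qed

lemma CC_Suc: "CC a b (Suc k) lam x = (\<Sum>v\<in>{..min x (lam 1)}. phi a b (lam 1) (lam 2) v * CC a b k (\<lambda>i. lam (Suc i)) v)"
  by simp

lemma CC_lower:
  assumes "\<And>r. 1 \<le> r \<Longrightarrow> r \<le> h \<Longrightarrow> lam r = M" and "1 \<le> h" and "h \<le> k"
    and "\<And>r. h < r \<Longrightarrow> r \<le> k + 1 \<Longrightarrow> lam r < M" and "x < M"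
  shows "CC a b k lam x = a * CC a b k (\<lambda>r. if r \<le> h then lam r - 1 else lam r) x"
  using assms
proof (induction k arbitrary: lam h x)
  case 0 then show ?case by simp
next
  case (Suc k)
  let ?lamA = "\<lambda>r. if r \<le> h then lam r - 1 else lam r"
  have l1: "lam 1 = M" "lam (Suc 0) = M" using Suc.prems by auto
  have hh: "Suc 0 \<le> h" using Suc.prems by simp
  have A1: "?lamA 1 = M - 1" using Suc.prems by simp
  have mn: "min x (lam 1) = x" "min x (?lamA 1) = x" using Suc.prems l1 A1 by auto
  show ?case
  proof (cases "h = 1")
    case True
    have l2: "lam 2 < M" using Suc.prems True by simp
    have A2: "?lamA 2 = lam 2" using True by simp
    have sh: "CC a b k (\<lambda>i. ?lamA (Suc i)) v = CC a b k (\<lambda>i. lam (Suc i)) v" for v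
      by (rule CC_cong) (use True in auto)
    have ph: "phi a b (lam 1) (lam 2) v = a * phi a b (?lamA 1) (?lamA 2) v" if "v \<le> x" for v
    proof -
      have e0: "M - max v (lam 2) = Suc (M - 1 - max v (lam 2))" using that Suc.prems l2 by simp
      have e: "a ^ (M - max v (lam 2)) = a * a ^ (M - 1 - max v (lam 2))" unfolding e0 by (rule power_Suc)
      have A1': "(if 1 \<le> h then M - 1 else M) = M - 1" using hh by simp
      show ?thesis unfolding phi_def A2 l1(1) A1' e by (rule mult.left_commute)
    qed
    define F where "F = (\<lambda>v. phi a b (lam 1) (lam 2) v * CC a b k (\<lambda>i. lam (Suc i)) v)"
    define G where "G = (\<lambda>v. phi a b (?lamA 1) (?lamA 2) v * CC a b k (\<lambda>i. ?lamA (Suc i)) v)"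
    have L: "CC a b (Suc k) lam x = (\<Sum>v\<in>{..x}. F v)"
      unfolding F_def CC_Suc mn(1) ..
    have R: "CC a b (Suc k) ?lamA x = (\<Sum>v\<in>{..x}. G v)"
      unfolding G_def CC_Suc mn(2) ..
    have pw: "F v = a * G v" if v: "v \<le> x" for v
    proof -
      have "F v = (a * phi a b (?lamA 1) (?lamA 2) v) * CC a b k (\<lambda>i. lam (Suc i)) v"
        unfolding F_def ph[OF v] ..
      also have "\<dots> = a * (phi a b (?lamA 1) (?lamA 2) v * CC a b k (\<lambda>i. lam (Suc i)) v)"
        by (rule mult.assoc)
      also have "\<dots> = a * G v" unfolding G_def sh ..
      finally show ?thesis .
    qed
    have "(\<Sum>v\<in>{..x}. F v) = (\<Sum>v\<in>{..x}. a * G v)"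
      by (rule sum.cong[OF refl]) (simp add: pw)
    then show ?thesis unfolding L R sum_distrib_left .
  next
    case False
    then have h2: "2 \<le> h" using Suc.prems by simp
    then have l2: "lam 2 = M" using Suc.prems by simp
    have A2: "?lamA 2 = M - 1" using h2 l2 by simp
    obtain k' where k: "k = Suc k'" using h2 Suc.prems by (cases k) auto
    have IH: "CC a b k (\<lambda>i. lam (Suc i)) v = a * CC a b k (\<lambda>i. ?lamA (Suc i)) v" if "v \<le> x" for v
    proof -
      have "CC a b k (\<lambda>i. lam (Suc i)) v = a * CC a b k (\<lambda>r. if r \<le> h - 1 then lam (Suc r) - 1 else lam (Suc r)) v"
        by (rule Suc.IH) (use Suc.prems that h2 in auto)
      also have "(\<lambda>r. if r \<le> h - 1 then lam (Suc r) - 1 else lam (Suc r)) = (\<lambda>i. ?lamA (Suc i))"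
        using h2 by (intro ext) auto
      finally show ?thesis .
    qed
    have ph: "phi a b (lam 1) (lam 2) v = phi a b (?lamA 1) (?lamA 2) v" if "v \<le> x" for v
      unfolding phi_def l1 l2 A1 A2 using that Suc.prems by (simp add: max_def)
    define F where "F = (\<lambda>v. phi a b (lam 1) (lam 2) v * CC a b k (\<lambda>i. lam (Suc i)) v)"
    define G where "G = (\<lambda>v. phi a b (?lamA 1) (?lamA 2) v * CC a b k (\<lambda>i. ?lamA (Suc i)) v)"
    have L: "CC a b (Suc k) lam x = (\<Sum>v\<in>{..x}. F v)"
      unfolding F_def CC_Suc mn(1) ..
    have R: "CC a b (Suc k) ?lamA x = (\<Sum>v\<in>{..x}. G v)"
      unfolding G_def CC_Suc mn(2) ..
    have pw: "F v = a * G v" if v: "v \<le> x" for v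
    proof -
      have "F v = phi a b (?lamA 1) (?lamA 2) v * (a * CC a b k (\<lambda>i. ?lamA (Suc i)) v)"
        unfolding F_def ph[OF v] IH[OF v] ..
      also have "\<dots> = a * G v" unfolding G_def by (rule mult.left_commute)
      finally show ?thesis .
    qed
    have "(\<Sum>v\<in>{..x}. F v) = (\<Sum>v\<in>{..x}. a * G v)"
      by (rule sum.cong[OF refl]) (simp add: pw)
    then show ?thesis unfolding L R sum_distrib_left .
  qed
qed

lemma DD_rec:
  assumes "\<And>r. 1 \<le> r \<Longrightarrow> r \<le> h \<Longrightarrow> lam r = M" and "1 \<le> h" and "h \<le> Suc k"
    and "\<And>r. h < r \<Longrightarrow> r \<le> Suc k + 1 \<Longrightarrow> lam r < M" and "0 < M"
  shows "DD a b (Suc k) lam = b * DD a b k (\<lambda>i. lam (Suc i)) + a * DD a b (Suc k) (\<lambda>r. if r \<le> h then lam r - 1 else lam r)"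
proof -
  let ?lamA = "\<lambda>r. if r \<le> h then lam r - 1 else lam r"
  let ?F = "\<lambda>v. phi a b (lam 1) (lam 2) v * CC a b k (\<lambda>i. lam (Suc i)) v"
  have l1: "lam 1 = M" "lam (Suc 0) = M" using assms by auto
  have l2: "lam 2 \<le> M" using assms by (cases "h = 1") (auto simp: less_imp_le)
  obtain M' where M': "M = Suc M'" using assms by (cases M) auto
  have "DD a b (Suc k) lam = (\<Sum>v\<le>M. ?F v)" by (simp add: DD_def l1)
  also have "\<dots> = (\<Sum>v\<le>M'. ?F v) + ?F M" unfolding M' by simp
  also have "(\<Sum>v\<le>M'. ?F v) = CC a b (Suc k) lam M'" using M' l1 by (simp add: min_def)
  also have "\<dots> = a * CC a b (Suc k) ?lamA M'"
    by (rule CC_lower) (use assms M' in auto)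
  also have "CC a b (Suc k) ?lamA M' = DD a b (Suc k) ?lamA"
    by (rule CC_ge) (use assms M' in simp)
  also have "?F M = b * DD a b k (\<lambda>i. lam (Suc i))"
  proof -
    have "phi a b (lam 1) (lam 2) M = b" using l1 l2 assms by (simp add: phi_def max_def)
    moreover have "CC a b k (\<lambda>i. lam (Suc i)) M = DD a b k (\<lambda>i. lam (Suc i))"
      by (rule CC_ge) (use l2 in \<open>simp add: numeral_2_eq_2\<close>)
    ultimately show ?thesis by simp
  qed
  finally show ?thesis by simp
qed

lemma DD_empty: "(\<And>r. 1 \<le> r \<Longrightarrow> r \<le> k + 1 \<Longrightarrow> lam r = 0) \<Longrightarrow> DD a b k lam = 1"
proof (induction k arbitrary: lam)
  case 0 then show ?case by (simp add: DD_def)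
next
  case (Suc k)
  have l: "lam 1 = 0" "lam 2 = 0" "lam (Suc 0) = 0" using Suc.prems by auto
  have "CC a b k (\<lambda>i. lam (Suc i)) 0 = DD a b k (\<lambda>i. lam (Suc i))"
    by (rule CC_ge) (use Suc.prems in simp)
  also have "\<dots> = 1" by (rule Suc.IH) (use Suc.prems in auto)
  finally show ?case by (simp add: DD_def l phi_def)
qed


lemma Qw_DD_aux:
  "k + (\<Sum>r\<in>{1..k}. lam r) = N \<Longrightarrow> (\<And>i j. 1 \<le> i \<Longrightarrow> i \<le> j \<Longrightarrow> j \<le> k \<Longrightarrow> lam j \<le> lam i) \<Longrightarrow>
   lam (k + 1) = 0 \<Longrightarrow> Qw a b k lam = DD a b k lam"
proof (induction N arbitrary: k lam rule: less_induct)
  case (less N)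
  show ?case
  proof (cases k)
    case 0 then show ?thesis using Qw_empty[of 0 lam a b] by (simp add: DD_def)
  next
    case (Suc k')
    have dec: "\<And>i j. 1 \<le> i \<Longrightarrow> i \<le> j \<Longrightarrow> j \<le> Suc k' \<Longrightarrow> lam j \<le> lam i" using less.prems(2) Suc by auto
    have z0: "lam (Suc k' + 1) = 0" using less.prems(3) Suc by simp
    show ?thesis
    proof (cases "lam 1 = 0")
      case True
      have z: "lam r = 0" if "1 \<le> r" "r \<le> k" for r using dec[of 1 r] True that Suc by simp
      have "Qw a b k lam = 1" by (rule Qw_empty) (rule z)
      moreover have "DD a b k lam = 1"
      proof (rule DD_empty)
        fix r assume "1 \<le> r" "r \<le> k + 1"
        then show "lam r = 0" using z less.prems(3) by (cases "r = k + 1") auto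
      qed
      ultimately show ?thesis by simp
    next
      case False
      define M where "M = lam 1"
      have Mpos: "0 < M" using False M_def by simp
      define H where "H = {r \<in> {1..Suc k'}. lam r = M}"
      have finH: "finite H" by (simp add: H_def)
      have neH: "1 \<in> H" using M_def by (simp add: H_def)
      define h where "h = Max H"
      have hH: "h \<in> H" using finH neH Max_in unfolding h_def by blast
      then have h1: "1 \<le> h" and hk: "h \<le> Suc k'" and lamh: "lam h = M" by (auto simp: H_def)
      have after: "lam r < M" if r: "h < r" "r \<le> Suc k'" for r
      proof -
        have "lam r \<le> M" using dec[of 1 r] r h1 M_def by simp
        moreover have "lam r \<noteq> M"
        proof
          assume "lam r = M"
          then have "r \<in> H" using r h1 by (simp add: H_def)
          then have "r \<le> h" using finH unfolding h_def by simp
          then show False using r by simp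
        qed
        ultimately show "lam r < M" by simp
      qed
      have eqM: "lam r = M" if "1 \<le> r" "r \<le> h" for r
        using dec[of 1 r] dec[of r h] that lamh M_def hk by simp
      have Qrec: "Qw a b (Suc k') lam = b * Qw a b k' (\<lambda>r. lam (if r < h then r else Suc r)) + a * Qw a b (Suc k') (\<lambda>r. if r \<le> h then lam r - 1 else lam r)"
        by (rule Qw_rec_explicit[OF dec M_def Mpos h1 hk lamh after])
      have Drec: "DD a b (Suc k') lam = b * DD a b k' (\<lambda>i. lam (Suc i)) + a * DD a b (Suc k') (\<lambda>r. if r \<le> h then lam r - 1 else lam r)"
      proof (rule DD_rec[where M=M])
        show "\<And>r. 1 \<le> r \<Longrightarrow> r \<le> h \<Longrightarrow> lam r = M" by (rule eqM)
        show "1 \<le> h" "h \<le> Suc k'" "0 < M" by (fact h1, fact hk, fact Mpos)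
        fix r assume r: "h < r" "r \<le> Suc k' + 1"
        then show "lam r < M" using after[of r] z0 Mpos by (cases "r = Suc k' + 1") auto
      qed
      have c1: "Qw a b k' (\<lambda>r. lam (if r < h then r else Suc r)) = Qw a b k' (\<lambda>i. lam (Suc i))"
      proof (rule Qw_cong)
        fix r assume "1 \<le> r" "r \<le> k'"
        then show "lam (if r < h then r else Suc r) = lam (Suc r)" using eqM[of r] eqM[of "Suc r"] by auto
      qed
      have S: "(\<Sum>r\<in>{1..Suc k'}. lam r) = lam 1 + (\<Sum>r\<in>{1..k'}. lam (Suc r))"
      proof -
        have "(\<Sum>r\<in>{1..Suc k'}. lam r) = lam 1 + (\<Sum>r\<in>{Suc 1..Suc k'}. lam r)"
          by (subst sum.atLeast_Suc_atMost) simp_all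
        also have "(\<Sum>r\<in>{Suc 1..Suc k'}. lam r) = (\<Sum>r\<in>{1..k'}. lam (Suc r))"
          by (rule sum.shift_bounds_cl_Suc_ivl)
        finally show ?thesis .
      qed
      have IH1: "Qw a b k' (\<lambda>i. lam (Suc i)) = DD a b k' (\<lambda>i. lam (Suc i))"
      proof (rule less.IH)
        show "k' + (\<Sum>r\<in>{1..k'}. lam (Suc r)) < N" using less.prems(1) Suc S by simp
        show "k' + (\<Sum>r\<in>{1..k'}. lam (Suc r)) = k' + (\<Sum>r\<in>{1..k'}. lam (Suc r))" ..
        show "\<And>i j. 1 \<le> i \<Longrightarrow> i \<le> j \<Longrightarrow> j \<le> k' \<Longrightarrow> lam (Suc j) \<le> lam (Suc i)" using dec by simp
        show "lam (Suc (k' + 1)) = 0" using z0 by simp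
      qed
      let ?lamA = "\<lambda>r. if r \<le> h then lam r - 1 else lam r"
      have IH2: "Qw a b (Suc k') ?lamA = DD a b (Suc k') ?lamA"
      proof (rule less.IH)
        have "(\<Sum>r\<in>{1..Suc k'}. ?lamA r) < (\<Sum>r\<in>{1..Suc k'}. lam r)"
        proof (rule sum_strict_mono_ex1)
          show "finite {1..Suc k'}" by simp
          show "\<forall>x\<in>{1..Suc k'}. ?lamA x \<le> lam x" by auto
          show "\<exists>x\<in>{1..Suc k'}. ?lamA x < lam x" using h1 M_def Mpos by (intro bexI[of _ 1]) auto
        qed
        then show "Suc k' + (\<Sum>r\<in>{1..Suc k'}. ?lamA r) < N" using less.prems(1) Suc by simp
        show "Suc k' + (\<Sum>r\<in>{1..Suc k'}. ?lamA r) = Suc k' + (\<Sum>r\<in>{1..Suc k'}. ?lamA r)" ..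
        show "?lamA j \<le> ?lamA i" if ij: "1 \<le> i" "i \<le> j" "j \<le> Suc k'" for i j
        proof (cases "j \<le> h")
          case True
          then show ?thesis using eqM[of i] eqM[of j] ij by simp
        next
          case False
          then have lj: "lam j < M" using after[of j] ij by simp
          show ?thesis
          proof (cases "i \<le> h")
            case True then show ?thesis using eqM[of i] ij lj False by simp
          next
            case False then show ?thesis using dec[OF ij] \<open>\<not> j \<le> h\<close> by simp
          qed
        qed
        show "?lamA (Suc k' + 1) = 0" using z0 hk by simp
      qed
      show ?thesis unfolding Suc Qrec Drec c1 IH1 IH2 ..
    qed
  qed
qed

theorem theorem5p1:
  fixes n k :: nat and lam :: "nat \<Rightarrow> nat" and a b :: real
  assumes "1 \<le> k" and "k \<le> n"
    and "\<And>i j. 1 \<le> i \<Longrightarrow> i \<le> j \<Longrightarrow> j \<le> k \<Longrightarrow> lam j \<le> lam i"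
    and "lam 1 \<le> n - k"
    and "lam (k + 1) = 0"
    and "b \<noteq> 0"
  shows "P_gen n k lam a b =
    a ^ k * b ^ (n - k) * det (mat k k (\<lambda>(i, j). Aentry lam a b (i + 1) (j + 1)))"
proof -
  have w: "P_gen n k lam a b = a ^ k * b ^ (n - k) * Qw a b k lam"
    unfolding P_gen_def wt_def Qw_def sum_distrib_left
    by (rule sum.cong) (simp_all add: power_add ac_simps)
  have "Qw a b k lam = DD a b k lam" by (rule Qw_DD_aux[OF refl]) (use assms in auto)
  moreover have "Det a b k lam = DD a b k lam" using Det_DD[where a=a and b=b and k=k and lam=lam] assms(3,5,6) by blast
  ultimately show ?thesis using w unfolding Det_def by simp
qed

end
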